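(* Let $n>2$ and $|h|<1$. (i) The integral $$g_\alpha(h)=\frac{1}{\Gamma(\alpha/2)}\int_{-1}^1|t-h|^{\alpha-1}(1-t^2)^{(n-3)/2}\,dt,\qquad \operatorname{Re}\alpha>0,$$ extends as an entire function of $\alpha$, and this extension represents a $C^\infty$ function of $h$ uniformly in $\alpha\in K$ for any compact subset $K$ of the complex plane. (ii) The value of this extension at $\alpha=3-n$ equals $\Gamma((n-1)/2)$. *)

theory Defs
  imports "HOL-Analysis.Analysis"
begin

definition g_int :: "nat \<Rightarrow> complex \<Rightarrow> real \<Rightarrow> complex" where
  "g_int n \<alpha> h = (1 / Gamma (\<alpha> / 2)) *
     integral {-1..1} (\<lambda>t. (complex_of_real \<bar>t - h\<bar>) powr (\<alpha> - 1)
                           * complex_of_real ((1 - t\<^sup>2) powr ((real n - 3) / 2)))"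

end

theory Submission
  imports Defs "HOL-Complex_Analysis.Complex_Analysis"
begin


lemma beta_x2_real:
  fixes s b :: real
  assumes s: "s > 0" and b: "b \<ge> 0"
  shows "((\<lambda>x. x powr (s - 1) * (1 - x\<^sup>2) powr b) has_integral Beta (s/2) (b+1) / 2) {0..1}"
proof -
  let ?f = "\<lambda>y::real. y powr (s/2 - 1) * (1 - y) powr (b + 1 - 1)"
  have fi: "?f absolutely_integrable_on {0..1}"
    unfolding absolutely_integrable_on_def
  proof
    show "?f integrable_on {0..1}" using integrable_Beta'[of "s/2" "b+1"] s b by simp
    have "(\<lambda>x. norm (?f x)) = ?f" by (auto simp: fun_eq_iff)
    then show "(\<lambda>x. norm (?f x)) integrable_on {0..1}" using integrable_Beta'[of "s/2" "b+1"] s b by simp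
  qed
  have fint: "integral {0..1} ?f = Beta (s/2) (b+1)"
    using has_integral_Beta_real[of "s/2" "b+1"] s b by (simp add: has_integral_iff)
  have img: "(\<lambda>x::real. x\<^sup>2) ` {0..1} = {0..1}"
  proof
    show "{0..1} \<subseteq> (\<lambda>x::real. x\<^sup>2) ` {0..1}"
    proof
      fix y :: real assume "y \<in> {0..1}"
      then show "y \<in> (\<lambda>x. x\<^sup>2) ` {0..1}"
        by (intro image_eqI[of _ _ "sqrt y"]) (auto simp: real_sqrt_le_1_iff)
    qed
  qed (auto simp: power_le_one)
  have der: "\<And>x. x \<in> {0..1} \<Longrightarrow> ((\<lambda>x::real. x\<^sup>2) has_field_derivative 2 * x) (at x within {0..1})"
    by (auto intro!: derivative_eq_intros)
  have inj: "inj_on (\<lambda>x::real. x\<^sup>2) {0..1}"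
    by (auto simp: inj_on_def power2_eq_iff)
  have "(\<lambda>x. \<bar>2 * x\<bar> *\<^sub>R ?f (x\<^sup>2)) absolutely_integrable_on {0..1} \<and>
        integral {0..1} (\<lambda>x. \<bar>2 * x\<bar> *\<^sub>R ?f (x\<^sup>2)) = Beta (s/2) (b+1)"
    using has_absolute_integral_change_of_variables_real[OF _ der inj, of ?f "Beta (s/2) (b+1)"]
      fi fint img by simp
  moreover have "\<bar>2 * x\<bar> *\<^sub>R ?f (x\<^sup>2) = 2 * (x powr (s - 1) * (1 - x\<^sup>2) powr b)"
    if "x \<in> {0..1}" for x
  proof (cases "x = 0")
    case False
    with that have x: "x > 0" by auto
    have "x\<^sup>2 = x powr 2" using x powr_realpow[of x 2] by simp
    then have "(x\<^sup>2) powr (s/2 - 1) = x powr (2 * (s/2 - 1))" by (simp add: powr_powr)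
    also have "2 * (s/2 - 1) = s - 2" by simp
    finally have "(x\<^sup>2) powr (s/2 - 1) = x powr (s - 2)" .
    moreover have "x * x powr (s - 2) = x powr (s - 1)"
      using x powr_add[of x 1 "s-2"] by simp
    ultimately show ?thesis using x by (simp add: mult_ac)
  qed simp
  ultimately have "(\<lambda>x. 2 * (x powr (s - 1) * (1 - x\<^sup>2) powr b)) integrable_on {0..1} \<and>
        integral {0..1} (\<lambda>x. 2 * (x powr (s - 1) * (1 - x\<^sup>2) powr b)) = Beta (s/2) (b+1)"
  proof -
    assume A: "(\<lambda>x. \<bar>2 * x\<bar> *\<^sub>R ?f (x\<^sup>2)) absolutely_integrable_on {0..1} \<and>
        integral {0..1} (\<lambda>x. \<bar>2 * x\<bar> *\<^sub>R ?f (x\<^sup>2)) = Beta (s/2) (b+1)"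
       and B: "\<And>x. x \<in> {0..1} \<Longrightarrow> \<bar>2 * x\<bar> *\<^sub>R ?f (x\<^sup>2) = 2 * (x powr (s - 1) * (1 - x\<^sup>2) powr b)"
    from A have "(\<lambda>x. \<bar>2 * x\<bar> *\<^sub>R ?f (x\<^sup>2)) integrable_on {0..1}"
      using absolutely_integrable_on_def by blast
    then show ?thesis using A B integrable_cong integral_cong by (metis (no_types, lifting))
  qed
  then show ?thesis
  proof -
    assume A: "(\<lambda>x. 2 * (x powr (s - 1) * (1 - x\<^sup>2) powr b)) integrable_on {0..1} \<and>
        integral {0..1} (\<lambda>x. 2 * (x powr (s - 1) * (1 - x\<^sup>2) powr b)) = Beta (s/2) (b+1)"
    then have "((\<lambda>x. 2 * (x powr (s - 1) * (1 - x\<^sup>2) powr b)) has_integral Beta (s/2) (b+1)) {0..1}"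
      using has_integral_integrable_integral by blast
    from has_integral_mult_right[OF this, of "1/2"] show ?thesis by simp
  qed
qed


lemma meas_cont_except:
  fixes f :: "real \<Rightarrow> complex"
  assumes "continuous_on (S - X) f" "finite X" "S \<in> sets lebesgue"
  shows "f \<in> borel_measurable (lebesgue_on S)"
proof -
  have SX: "S - X \<in> sets lebesgue" using assms(3) negligible_imp_sets[OF negligible_finite[OF assms(2)]] by (rule sets.Diff)
  have "f \<in> borel_measurable (lebesgue_on (S - X))"
    by (rule continuous_imp_measurable_on_sets_lebesgue[OF assms(1) SX])
  then have "f measurable_on (S - X)" using measurable_on_iff_borel_measurable[OF SX, of f] by blast
  moreover have "negligible ((S - X - S) \<union> (S - (S - X)))"
    by (rule negligible_subset[of X]) (use assms(2) in \<open>auto intro: negligible_finite\<close>)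
  ultimately have "f measurable_on S" by (rule measurable_on_spike_set)
  then show ?thesis using measurable_on_iff_borel_measurable[OF assms(3), of f] by blast
qed

lemma mellin01_absint:
  fixes W :: "real \<Rightarrow> complex"
  assumes W: "continuous_on {0..1} W" and s: "Re s > 0"
  shows "(\<lambda>x. of_real x powr (s - 1) * W x) absolutely_integrable_on {0..1}"
proof -
  obtain M where M0: "\<forall>y\<in>W ` {0..1}. norm y \<le> M"
    using compact_imp_bounded[OF compact_continuous_image[OF W compact_Icc]]
    unfolding bounded_iff by blast
  then have M: "\<And>x. x \<in> {0..1} \<Longrightarrow> norm (W x) \<le> M" by blast
  show ?thesis
  proof (rule measurable_bounded_by_integrable_imp_absolutely_integrable)
    show "(\<lambda>x. of_real x powr (s - 1) * W x) \<in> borel_measurable (lebesgue_on {0..1})"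
    proof (rule meas_cont_except[where X="{0}"])
      show "continuous_on ({0..1} - {0}) (\<lambda>x. complex_of_real x powr (s - 1) * W x)"
        by (intro continuous_intros continuous_on_subset[OF W]) auto
    qed auto
    show "(\<lambda>x. M * x powr (Re s - 1)) integrable_on {0..1}"
      using integrable_cmul[OF integrable_on_powr_from_0[of "Re s - 1" 1], of M] s by simp
    fix x :: real assume x: "x \<in> {0..1}"
    have "norm (of_real x powr (s - 1) * W x) = x powr (Re s - 1) * norm (W x)"
      using x by (simp add: norm_mult norm_powr_real_powr)
    also have "\<dots> \<le> x powr (Re s - 1) * M" using M[OF x] by (intro mult_left_mono) auto
    finally show "norm (of_real x powr (s - 1) * W x) \<le> M * x powr (Re s - 1)" by (simp add: mult_ac)
  qed auto
qed

lemma mellin01_holo: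
  fixes W :: "real \<Rightarrow> complex"
  assumes W: "continuous_on {0..1} W"
  shows "(\<lambda>s. integral {0..1} (\<lambda>x. of_real x powr (s - 1) * W x)) holomorphic_on {s. Re s > 0}"
proof -
  obtain M where M0: "\<forall>y\<in>W ` {0..1}. norm y \<le> M"
    using compact_imp_bounded[OF compact_continuous_image[OF W compact_Icc]]
    unfolding bounded_iff by blast
  then have M: "\<And>x. x \<in> {0..1} \<Longrightarrow> norm (W x) \<le> M" by blast
  define ep :: "nat \<Rightarrow> real" where "ep N = inverse (real N + 2)" for N
  have ep: "0 < ep N" "ep N < 1" for N by (auto simp: ep_def field_simps)
  define FN where "FN N s = integral {ep N..1} (\<lambda>x. of_real x powr (s - 1) * W x)" for N s
  have holN: "FN N holomorphic_on {s. Re s > 0}" for N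
    unfolding FN_def cbox_interval[symmetric]
  proof (rule leibniz_rule_holomorphic[where fx = "\<lambda>s x. Ln (of_real x) * of_real x powr (s - 1) * W x"])
    fix s x assume "s \<in> {s. Re s > 0}" "x \<in> cbox (ep N) 1"
    then have x: "x > 0" using ep[of N] by auto
    show "((\<lambda>s. complex_of_real x powr (s - 1) * W x) has_field_derivative
            Ln (of_real x) * of_real x powr (s - 1) * W x) (at s within {s. Re s > 0})"
      using x by (auto intro!: derivative_eq_intros simp: powr_def)
  next
    fix s assume "s \<in> {s. Re s > 0}"
    show "(\<lambda>x. complex_of_real x powr (s - 1) * W x) integrable_on cbox (ep N) 1"
      using ep[of N] by (intro integrable_continuous continuous_intros continuous_on_subset[OF W]) auto
  next
    show "continuous_on ({s. Re s > 0} \<times> cbox (ep N) 1)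
            (\<lambda>(s, x). Ln (of_real x) * of_real x powr (s - 1) * W x)"
    proof -
      let ?U = "{s. Re s > 0} \<times> cbox (ep N) 1"
      have c1: "continuous_on ?U (\<lambda>p. W (snd p))"
        by (rule continuous_on_compose2[OF W continuous_on_snd]) (use ep[of N] in auto)
      have c2: "continuous_on ?U (\<lambda>p. Ln (of_real (snd p)) * exp ((fst p - 1) * Ln (of_real (snd p))))"
        using ep[of N] by (intro continuous_intros) (auto simp: nonpos_Reals_def)
      have "continuous_on ?U (\<lambda>p. Ln (of_real (snd p)) * exp ((fst p - 1) * Ln (of_real (snd p))) * W (snd p))"
        by (intro continuous_intros c1 c2)
      then show ?thesis
        by (rule continuous_on_cong[THEN iffD1, rotated 2]) (use ep[of N] in \<open>auto simp: powr_def\<close>)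
    qed
  qed (auto intro: convex_halfspace_Re_gt)
  show ?thesis
  proof (rule holomorphic_uniform_sequence[OF _ holN])
    show "open {s. Re s > 0}" by (simp add: open_halfspace_Re_gt)
    fix s0 assume s0: "s0 \<in> {s. Re s > 0}"
    define d where "d = Re s0 / 2"
    have d: "d > 0" using s0 by (auto simp: d_def)
    have cb: "cball s0 d \<subseteq> {s. Re s > 0}"
    proof
      fix s assume "s \<in> cball s0 d"
      then have "\<bar>Re s0 - Re s\<bar> \<le> d"
        using abs_Re_le_cmod[of "s0 - s"] by (auto simp: dist_norm)
      then have "Re s0 - Re s \<le> Re s0 / 2" unfolding d_def abs_le_iff by linarith
      then show "s \<in> {s. Re s > 0}" using s0 by simp
    qed
    have Red: "Re s \<ge> d" if "s \<in> cball s0 d" for s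
    proof -
      from that have "\<bar>Re s0 - Re s\<bar> \<le> d"
        using abs_Re_le_cmod[of "s0 - s"] by (auto simp: dist_norm)
      then show ?thesis unfolding d_def abs_le_iff by linarith
    qed
    have bound: "norm (FN N s - integral {0..1} (\<lambda>x. of_real x powr (s - 1) * W x))
                   \<le> max M 0 * (ep N powr d / d)" if s: "s \<in> cball s0 d" for N s
    proof -
      have Res: "Re s > 0" using cb s by auto
      have int: "(\<lambda>x. of_real x powr (s - 1) * W x) integrable_on {0..1}"
        using mellin01_absint[OF W Res] absolutely_integrable_on_def by blast
      have "integral {0..ep N} (\<lambda>x. of_real x powr (s - 1) * W x) + FN N s
             = integral {0..1} (\<lambda>x. of_real x powr (s - 1) * W x)"
        unfolding FN_def by (rule Henstock_Kurzweil_Integration.integral_combine[OF _ _ int]) (use ep[of N] in auto)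
      then have "FN N s - integral {0..1} (\<lambda>x. of_real x powr (s - 1) * W x)
                  = - integral {0..ep N} (\<lambda>x. of_real x powr (s - 1) * W x)" by (simp add: algebra_simps)
      then have "norm (FN N s - integral {0..1} (\<lambda>x. of_real x powr (s - 1) * W x))
                  = norm (integral {0..ep N} (\<lambda>x. of_real x powr (s - 1) * W x))" by simp
      also have "\<dots> \<le> integral {0..ep N} (\<lambda>x. max M 0 * x powr (d - 1))"
      proof (rule integral_norm_bound_integral)
        show "(\<lambda>x. of_real x powr (s - 1) * W x) integrable_on {0..ep N}"
          using ep[of N] by (intro integrable_on_subinterval[OF int]) auto
        show "(\<lambda>x. max M 0 * x powr (d - 1)) integrable_on {0..ep N}"
          using integrable_cmul[OF integrable_on_powr_from_0[of "d - 1" "ep N"], of "max M 0"] d ep[of N]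
          by simp
        fix x assume x: "x \<in> {0..ep N}"
        then have x1: "x \<in> {0..1}" using ep[of N] by auto
        have "norm (of_real x powr (s - 1) * W x) = x powr (Re s - 1) * norm (W x)"
          using x by (simp add: norm_mult norm_powr_real_powr)
        also have "\<dots> \<le> x powr (d - 1) * max M 0"
          using M[OF x1] x1 Red[OF s] by (intro mult_mono powr_mono') auto
        finally show "norm (of_real x powr (s - 1) * W x) \<le> max M 0 * x powr (d - 1)"
          by (simp add: mult_ac)
      qed
      also have "\<dots> = max M 0 * (ep N powr d / d)"
        using has_integral_powr_from_0[of "d - 1" "ep N"] d ep[of N]
        by (subst integral_mult_right) (simp add: integral_unique)
      finally show ?thesis .
    qed
    have lim: "(\<lambda>N. max M 0 * (ep N powr d / d)) \<longlonglongrightarrow> max M 0 * (0 / d)"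
    proof (intro tendsto_intros)
      have fl: "filterlim (\<lambda>N. 2 + real N) at_top sequentially"
        by (rule filterlim_tendsto_add_at_top[OF tendsto_const filterlim_real_sequentially])
      have "(\<lambda>N. (2 + real N) powr (- d)) \<longlonglongrightarrow> 0"
        using d by (intro tendsto_neg_powr fl) auto
      moreover have "(2 + real N) powr (- d) = ep N powr d" for N
        by (simp add: ep_def powr_minus powr_divide inverse_eq_divide add.commute)
      ultimately show "(\<lambda>N. ep N powr d) \<longlonglongrightarrow> 0" by simp
    qed (use d in simp)
    have "uniform_limit (cball s0 d) FN (\<lambda>s. integral {0..1} (\<lambda>x. of_real x powr (s - 1) * W x)) sequentially"
    proof (rule uniform_limitI)
      fix e :: real assume e: "e > 0"
      from lim e have "eventually (\<lambda>N. max M 0 * (ep N powr d / d) < e) sequentially"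
        by (auto dest: order_tendstoD)
      then show "\<forall>\<^sub>F N in sequentially. \<forall>s\<in>cball s0 d.
                   dist (FN N s) (integral {0..1} (\<lambda>x. of_real x powr (s - 1) * W x)) < e"
      proof eventually_elim
        case (elim N)
        show ?case
        proof
          fix s assume "s \<in> cball s0 d"
          from bound[OF this, of N] elim show "dist (FN N s)
             (integral {0..1} (\<lambda>x. complex_of_real x powr (s - 1) * W x)) < e"
            by (simp add: dist_norm)
        qed
      qed
    qed
    then show "\<exists>d>0. cball s0 d \<subseteq> {s. Re s > 0} \<and>
       uniform_limit (cball s0 d) FN (\<lambda>s. integral {0..1} (\<lambda>x. of_real x powr (s - 1) * W x)) sequentially"
      using d cb by blast
  qed
qed


lemma beta_x2_complex:
  fixes b :: real and s :: complex
  assumes b: "b \<ge> 0" and s: "Re s > 0"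
  shows "((\<lambda>x. of_real x powr (s - 1) * of_real ((1 - x\<^sup>2) powr b)) has_integral
           (Gamma (s/2) * of_real (Gamma (b+1)) * rGamma (s/2 + of_real b + 1) / 2)) {0..1}"
proof -
  define Wr where "Wr x = (if b = 0 then 1 else (1 - x\<^sup>2) powr b)" for x :: real
  have Wr_eq: "(1 - x\<^sup>2) powr b = Wr x" if "x \<in> {0..1} - {1}" for x
    using that by (auto simp: Wr_def power2_eq_1_iff)
  have Wr_cont: "continuous_on {0..1} Wr"
  proof (cases "b = 0")
    case True then show ?thesis by (simp add: Wr_def)
  next
    case False
    then have "continuous_on {0..1} (\<lambda>x::real. (1 - x\<^sup>2) powr b)"
      using b by (intro continuous_on_powr' continuous_intros) (auto simp: power_le_one)
    then show ?thesis using False by (simp add: Wr_def)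
  qed
  define W where "W x = complex_of_real (Wr x)" for x
  have W_cont: "continuous_on {0..1} W"
    unfolding W_def by (intro continuous_intros Wr_cont)
  define F where "F s = integral {0..1} (\<lambda>x. of_real x powr (s - 1) * W x)" for s
  define T :: "complex \<Rightarrow> complex" where "T s = Gamma (s/2) * of_real (Gamma (b+1)) * rGamma (s/2 + of_real b + 1) / 2" for s
  have holF: "F holomorphic_on {s. Re s > 0}"
    unfolding F_def by (rule mellin01_holo[OF W_cont])
  have holT: "T holomorphic_on {s. Re s > 0}"
    unfolding T_def
  proof (intro holomorphic_intros)
    fix z :: complex assume "z \<in> {s. Re s > 0}"
    then show "z / 2 \<notin> \<int>\<^sub>\<le>\<^sub>0"
      by (auto elim!: nonpos_Ints_cases)
  qed auto
  have real_case: "F (of_real r) = T (of_real r)" if r: "r > 0" for r :: real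
  proof -
    have "((\<lambda>x. x powr (r - 1) * (1 - x\<^sup>2) powr b) has_integral Beta (r/2) (b+1) / 2) {0..1}"
      by (rule beta_x2_real[OF r b])
    then have "((\<lambda>x. x powr (r - 1) * Wr x) has_integral Beta (r/2) (b+1) / 2) {0..1}"
      by (rule has_integral_spike_finite[of "{1}", rotated 2]) (use Wr_eq in auto)
    from has_integral_linear[OF this bounded_linear_of_real[where 'a=complex]]
    have "((\<lambda>x. complex_of_real (x powr (r - 1) * Wr x)) has_integral of_real (Beta (r/2) (b+1) / 2)) {0..1}"
      by (simp add: o_def)
    moreover have "complex_of_real (x powr (r - 1) * Wr x) = of_real x powr (of_real r - 1) * W x"
      if "x \<in> {0..1}" for x
      using that by (simp add: W_def powr_of_real[symmetric])
    ultimately have "((\<lambda>x. of_real x powr (of_real r - 1) * W x) has_integral of_real (Beta (r/2) (b+1) / 2)) {0..1}"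
      using has_integral_cong by (metis (no_types, lifting))
    then have "F (of_real r) = of_real (Beta (r/2) (b+1) / 2)"
      unfolding F_def by (rule integral_unique)
    also have "\<dots> = T (of_real r)"
    proof -
      have g1: "Gamma (complex_of_real r / 2) = of_real (Gamma (r/2))"
        using Gamma_complex_of_real[of "r/2"] by simp
      have g2: "rGamma (complex_of_real r / 2 + of_real b + 1) = of_real (inverse (Gamma (r/2+b+1)))"
        using Gamma_complex_of_real[of "r/2+b+1"] by (simp add: rGamma_inverse_Gamma)
      show ?thesis unfolding T_def g1 g2 by (simp add: Beta_def field_simps)
    qed
    finally show ?thesis .
  qed
  have FT: "F s - T s = 0"
  proof (rule analytic_continuation[of "\<lambda>s. F s - T s" "{s. Re s > 0}" "of_real ` {0<..}" 1])
    show "(\<lambda>s. F s - T s) holomorphic_on {s. Re s > 0}" by (intro holomorphic_intros holF holT)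
    show "open {s. Re s > 0}" by (simp add: open_halfspace_Re_gt)
    show "connected {s. Re s > 0}" by (intro convex_connected convex_halfspace_Re_gt)
    show "of_real ` {0<..} \<subseteq> {s. Re s > 0}" by auto
    show "(1::complex) \<in> {s. Re s > 0}" by simp
    show "(1::complex) islimpt of_real ` {0<..}"
      unfolding islimpt_approachable
    proof (intro allI impI)
      fix e :: real assume e: "e > 0"
      show "\<exists>x'\<in>(of_real ` {0<..} :: complex set). x' \<noteq> 1 \<and> dist x' 1 < e"
      proof (rule bexI[of _ "complex_of_real (1 + e/2)"])
        show "complex_of_real (1 + e/2) \<in> of_real ` {0<..}" using e by (intro imageI) auto
        have "complex_of_real (1 + e/2) - 1 = complex_of_real (e/2)" by simp
        then have "dist (complex_of_real (1 + e/2)) 1 = e/2" using e by (simp add: dist_norm)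
        moreover have "complex_of_real (1 + e/2) \<noteq> 1" using e by (simp add: complex_eq_iff)
        ultimately show "complex_of_real (1 + e/2) \<noteq> 1 \<and> dist (complex_of_real (1 + e/2)) 1 < e"
          using e by simp
      qed
    qed
    show "\<And>z. z \<in> of_real ` {0<..} \<Longrightarrow> F z - T z = 0" using real_case by auto
    show "s \<in> {s. Re s > 0}" using s by simp
  qed
  have int: "(\<lambda>x. of_real x powr (s - 1) * W x) integrable_on {0..1}"
    using mellin01_absint[OF W_cont s] absolutely_integrable_on_def by blast
  then have "((\<lambda>x. of_real x powr (s - 1) * W x) has_integral T s) {0..1}"
    using FT unfolding F_def by (simp add: has_integral_integrable_integral)
  then show ?thesis unfolding T_def
    by (rule has_integral_spike_finite[of "{1}", rotated 2]) (use Wr_eq in \<open>auto simp: W_def\<close>)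
qed


lemma cpow_pos: "x > 0 \<Longrightarrow> complex_of_real x powr z = exp (z * of_real (ln x))"
  by (simp add: powr_def Ln_of_real)

lemma moment:
  fixes b :: real and \<alpha> :: complex
  assumes b: "b \<ge> 0" and a: "Re \<alpha> > 0"
  shows "((\<lambda>x. of_real \<bar>x\<bar> powr (\<alpha> - 1) * of_real ((1 - x\<^sup>2) powr b) * of_real x ^ m) has_integral
          ((1 + (-1)^m) * (Gamma ((\<alpha> + of_nat m)/2) * of_real (Gamma (b+1)) *
             rGamma ((\<alpha> + of_nat m)/2 + of_real b + 1) / 2))) {-1..1}"
proof -
  define V where "V = Gamma ((\<alpha> + of_nat m)/2) * of_real (Gamma (b+1)) * rGamma ((\<alpha> + of_nat m)/2 + of_real b + 1) / 2"
  define f where "f x = of_real \<bar>x\<bar> powr (\<alpha> - 1) * of_real ((1 - x\<^sup>2) powr b) * (of_real x ^ m :: complex)" for x :: real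
  have A: "((\<lambda>x. of_real x powr ((\<alpha> + of_nat m) - 1) * of_real ((1 - x\<^sup>2) powr b)) has_integral V) {0..1}"
    unfolding V_def by (rule beta_x2_complex[OF b]) (use a in simp)
  have key: "of_real x powr (\<alpha> - 1) * (of_real x ^ m :: complex) = of_real x powr ((\<alpha> + of_nat m) - 1)"
    if "x > 0" for x :: real
  proof -
    have "exp (of_nat m * complex_of_real (ln x)) = exp (complex_of_real (ln x)) ^ m"
      by (rule exp_of_nat_mult)
    also have "exp (complex_of_real (ln x)) = of_real x" using that by (simp add: exp_of_real)
    finally have "(of_real x ^ m :: complex) = exp (of_nat m * of_real (ln x))" by simp
    then show ?thesis using that by (simp add: cpow_pos exp_add[symmetric] algebra_simps)
  qed
  have B1: "(f has_integral V) {0..1}"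
  proof (rule has_integral_spike_finite[of "{0}", rotated 2, OF A])
    fix x :: real assume "x \<in> {0..1} - {0}"
    then have x: "x > 0" by auto
    show "f x = of_real x powr ((\<alpha> + of_nat m) - 1) * of_real ((1 - x\<^sup>2) powr b)"
      using key[OF x] x by (simp add: f_def mult_ac)
  qed auto
  have "((\<lambda>x. f (- x)) has_integral (-1)^m * V) {0..1}"
  proof (rule has_integral_spike_finite[of "{0}", rotated 2, OF has_integral_mult_right[OF A]])
    fix x :: real assume "x \<in> {0..1} - {0}"
    then have x: "x > 0" by auto
    have "f (-x) = (-1)^m * (of_real x powr (\<alpha> - 1) * of_real x ^ m * of_real ((1 - x\<^sup>2) powr b))"
      using x by (simp add: f_def power_minus[of "complex_of_real x"] mult_ac)
    also have "\<dots> = (-1)^m * (of_real x powr ((\<alpha> + of_nat m) - 1) * of_real ((1 - x\<^sup>2) powr b))"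
      using key[OF x] by simp
    finally show "f (-x) = (-1)^m * (of_real x powr ((\<alpha> + of_nat m) - 1) * of_real ((1 - x\<^sup>2) powr b))" .
  qed auto
  then have "((\<lambda>x. (\<lambda>y. f (- y)) (- x)) has_integral (-1)^m * V) {- 1..- 0}"
    by (rule has_integral_reflect_real[THEN iffD2])
  then have B2: "(f has_integral (-1)^m * V) {-1..0}" by simp
  have "(f has_integral ((-1)^m * V + V)) {-1..1}"
    by (rule has_integral_combine[OF _ _ B2 B1]) auto
  moreover have eq: "(-1)^m * V + V = (1 + (-1)^m) * V" by (simp add: distrib_right)
  ultimately have "(f has_integral ((1 + (-1)^m) * V)) {-1..1}" by simp
  then show ?thesis unfolding f_def V_def .
qed


lemma pochhammer_nonneg0: "0 \<le> (x::real) \<Longrightarrow> 0 \<le> pochhammer x n"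
  by (cases "x = 0") (auto simp: pochhammer_0_left pochhammer_nonneg)

lemma norm_pochhammer_le: "norm (pochhammer (z::complex) n) \<le> pochhammer (norm z) n"
proof (induction n)
  case 0 then show ?case by simp
next
  case (Suc n)
  have "norm (pochhammer z (Suc n)) = norm (pochhammer z n) * norm (z + of_nat n)"
    by (simp add: pochhammer_Suc norm_mult)
  also have "\<dots> \<le> pochhammer (norm z) n * (norm z + of_nat n)"
    by (intro mult_mono Suc.IH) (auto intro: order_trans[OF norm_triangle_ineq] pochhammer_nonneg0)
  also have "\<dots> = pochhammer (norm z) (Suc n)" by (simp add: pochhammer_Suc)
  finally show ?case .
qed

lemma pochhammer_mono_real: "0 \<le> x \<Longrightarrow> x \<le> y \<Longrightarrow> pochhammer (x::real) n \<le> pochhammer y n"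
proof (induction n)
  case 0 then show ?case by simp
next
  case (Suc n)
  then show ?case
    by (simp add: pochhammer_Suc) (intro mult_mono, auto simp: pochhammer_nonneg0)
qed

lemma norm_gchoose_neg_le:
  "norm ((- c) gchoose n :: complex) \<le> pochhammer (norm c) n / fact n"
proof -
  have "(- c) gchoose n = (-1)^n * pochhammer c n / fact n"
    by (simp add: gbinomial_pochhammer)
  then have "norm ((- c) gchoose n) = norm (pochhammer c n) / fact n"
    by (simp add: norm_mult norm_divide norm_power)
  also have "\<dots> \<le> pochhammer (norm c) n / fact n"
    by (intro divide_right_mono norm_pochhammer_le) auto
  finally show ?thesis .
qed

lemma summable_pochhammer_geom:
  fixes r t :: real assumes "r \<ge> 0" "0 \<le> t" "t < 1"
  shows "summable (\<lambda>n. pochhammer r n / fact n * t ^ n)"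
proof -
  have "(\<lambda>n. ((- r) gchoose n) * (- t) ^ n) sums (1 + (- t)) powr (- r)"
    using assms by (intro gen_binomial_real) auto
  moreover have "((- r) gchoose n) * (- t) ^ n = pochhammer r n / fact n * t ^ n" for n
  proof -
    have e: "(-1::real)^n * (-1)^n = 1" by (simp add: power_mult_distrib[symmetric])
    have "((- r) gchoose n) * (- t) ^ n = ((-1)^n * (-1)^n) * (pochhammer r n / fact n * t ^ n)"
      by (simp add: gbinomial_pochhammer power_minus[of t])
    then show ?thesis using e by simp
  qed
  ultimately show ?thesis by (auto simp: sums_iff)
qed

lemma summable_gchoose_norm:
  fixes c :: complex and t :: real assumes "0 \<le> t" "t < 1"
  shows "summable (\<lambda>n. norm ((- c) gchoose n) * t ^ n)"
proof (rule summable_comparison_test[OF _ summable_pochhammer_geom[of "norm c" t]])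
  show "\<exists>N. \<forall>n\<ge>N. norm (norm ((- c) gchoose n) * t ^ n) \<le> pochhammer (norm c) n / fact n * t ^ n"
  proof (intro exI[of _ 0] allI impI)
    fix n :: nat
    have "norm (norm ((- c) gchoose n) * t ^ n) = norm ((- c) gchoose n) * t ^ n"
      using assms by simp
    also have "\<dots> \<le> pochhammer (norm c) n / fact n * t ^ n"
      using assms by (intro mult_right_mono norm_gchoose_neg_le) auto
    finally show "norm (norm ((- c) gchoose n) * t ^ n) \<le> pochhammer (norm c) n / fact n * t ^ n" .
  qed
qed (use assms in simp_all)


lemma mob_pos: "\<bar>h\<bar> < 1 \<Longrightarrow> x \<in> {-1..1} \<Longrightarrow> 1 + h * x > (0::real)"
proof -
  assume h: "\<bar>h\<bar> < 1" and x: "x \<in> {-1..1}"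
  have "\<bar>x\<bar> \<le> 1" using x by auto
  then have "\<bar>h\<bar> * \<bar>x\<bar> \<le> \<bar>h\<bar>" by (intro mult_left_le) auto
  then have "\<bar>h * x\<bar> < 1" using h by (simp add: abs_mult)
  then show ?thesis by linarith
qed

lemma mob_deriv:
  assumes "1 + h * x \<noteq> (0::real)"
  shows "((\<lambda>x. (x + h) / (1 + h * x)) has_field_derivative (1 - h\<^sup>2) / (1 + h * x)\<^sup>2) (at x within S)"
  using assms by (auto intro!: derivative_eq_intros simp: field_simps power2_eq_square)

lemma mob_inj: assumes "\<bar>h\<bar> < 1" shows "inj_on (\<lambda>x. (x + h) / (1 + h * x)) {-1..(1::real)}"
proof (rule inj_onI)
  fix x y :: real assume x: "x \<in> {-1..1}" and y: "y \<in> {-1..1}" and eq: "(x + h) / (1 + h * x) = (y + h) / (1 + h * y)"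
  have px: "1 + h * x > 0" and py: "1 + h * y > 0" using mob_pos[OF assms] x y by auto
  from eq px py have "(x + h) * (1 + h * y) = (y + h) * (1 + h * x)" by (simp add: field_simps)
  then have "(x - y) * (1 - h\<^sup>2) = 0" by (simp add: algebra_simps power2_eq_square)
  moreover have "1 - h\<^sup>2 \<noteq> 0" using assms by (simp add: power2_eq_1_iff abs_if split: if_splits) 
  ultimately show "x = y" by simp
qed

lemma mob_image: assumes h: "\<bar>h\<bar> < 1" shows "(\<lambda>x. (x + h) / (1 + h * x)) ` {-1..(1::real)} = {-1..1}"
proof
  show "(\<lambda>x. (x + h) / (1 + h * x)) ` {-1..1} \<subseteq> {-1..1}"
  proof
    fix t assume "t \<in> (\<lambda>x. (x + h) / (1 + h * x)) ` {-1..1}"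
    then obtain x where x: "x \<in> {-1..1}" and t: "t = (x + h) / (1 + h * x)" by auto
    have p: "1 + h * x > 0" using mob_pos[OF h x] .
    have "(1 - h) * (1 - x) \<ge> 0" "(1 + h) * (1 + x) \<ge> 0" using h x by auto
    then have "x + h \<le> 1 + h * x" "-(1 + h * x) \<le> x + h" by (auto simp: algebra_simps)
    then show "t \<in> {-1..1}" using p by (auto simp: t field_simps)
  qed
next
  show "{-1..1} \<subseteq> (\<lambda>x. (x + h) / (1 + h * x)) ` {-1..1}"
  proof
    fix t :: real assume t: "t \<in> {-1..1}"
    have p: "1 - h * t > 0" using mob_pos[of "-h" t] h t by auto
    define x where "x = (t - h) / (1 - h * t)"
    have "(1 + h) * (1 - t) \<ge> 0" "(1 - h) * (1 + t) \<ge> 0" using h t by auto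
    then have "t - h \<le> 1 - h * t" "-(1 - h * t) \<le> t - h" by (auto simp: algebra_simps)
    then have xin: "x \<in> {-1..1}" using p by (auto simp: x_def field_simps)
    have e1: "1 + h * x = (1 - h\<^sup>2) / (1 - h * t)" using p by (simp add: x_def field_simps power2_eq_square)
    have e2: "x + h = t * (1 - h\<^sup>2) / (1 - h * t)" using p by (simp add: x_def field_simps power2_eq_square)
    have nz: "1 - h\<^sup>2 \<noteq> 0" using h by (simp add: power2_eq_1_iff abs_if split: if_splits)
    have "(x + h) / (1 + h * x) = (t * (1 - h\<^sup>2) / (1 - h * t)) / ((1 - h\<^sup>2) / (1 - h * t))"
      unfolding e1 e2 ..
    also have "\<dots> = t"
    proof -
      have gen: "\<And>c d. c \<noteq> 0 \<Longrightarrow> d \<noteq> 0 \<Longrightarrow> (t * c / d) / (c / d) = (t::real)" by simp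
      show ?thesis using p nz by (intro gen) auto
    qed
    finally have "(x + h) / (1 + h * x) = t" .
    then show "t \<in> (\<lambda>x. (x + h) / (1 + h * x)) ` {-1..1}" using xin by force
  qed
qed

lemma mob_integrand:
  fixes \<alpha> :: complex and b h x :: real
  assumes h: "\<bar>h\<bar> < 1" and x: "x \<in> {-1<..<1}" "x \<noteq> 0"
  shows "\<bar>(1 - h\<^sup>2) / (1 + h * x)\<^sup>2\<bar> *\<^sub>R
           (of_real \<bar>(x + h) / (1 + h * x) - h\<bar> powr (\<alpha> - 1) *
            of_real ((1 - ((x + h) / (1 + h * x))\<^sup>2) powr b))
       = of_real (1 - h\<^sup>2) powr (\<alpha> + of_real b) *
           (of_real \<bar>x\<bar> powr (\<alpha> - 1) * of_real ((1 - x\<^sup>2) powr b) *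
            (1 + of_real (h * x)) powr (- (\<alpha> + of_real (2 * b + 1))))"
proof -
  define v where "v = 1 + h * x"
  define u where "u = 1 - h\<^sup>2"
  define p where "p = \<bar>x\<bar>"
  define q where "q = 1 - x\<^sup>2"
  have v: "v > 0" unfolding v_def using mob_pos[OF h, of x] x by auto
  have u: "u > 0" unfolding u_def using h by (simp add: abs_less_iff power2_less_1_iff)
  have p: "p > 0" unfolding p_def using x by auto
  have q: "q > 0" unfolding q_def using x by (simp add: abs_less_iff power2_less_1_iff)
  have A1: "\<bar>(x + h) / (1 + h * x) - h\<bar> = p * u / v"
  proof -
    have "(x + h) / (1 + h * x) - h = x * u / v" using v by (simp add: v_def u_def field_simps power2_eq_square)
    then show ?thesis using u v by (simp add: p_def abs_mult abs_divide)
  qed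
  have A2: "1 - ((x + h) / (1 + h * x))\<^sup>2 = q * u / v\<^sup>2"
  proof -
    have vv: "1 + h * x = v" by (simp add: v_def)
    have f2: "1 - ((x + h) / v)\<^sup>2 = (v\<^sup>2 - (x + h)\<^sup>2) / v\<^sup>2"
      using v by (simp add: field_simps power2_eq_square)
    have f3: "v\<^sup>2 - (x + h)\<^sup>2 = q * u"
      by (simp add: v_def q_def u_def power2_eq_square algebra_simps)
    show ?thesis unfolding vv f2 f3 ..
  qed
  have A3: "\<bar>(1 - h\<^sup>2) / (1 + h * x)\<^sup>2\<bar> = u / v\<^sup>2" using u v by (simp add: u_def v_def)
  have L1: "ln (p * u / v) = ln p + ln u - ln v" using p u v by (simp add: ln_mult ln_div)
  have L2: "ln (q * u / v\<^sup>2) = ln q + ln u - 2 * ln v" using q u v by (simp add: ln_mult ln_div ln_realpow)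
  have L3: "ln (u / v\<^sup>2) = ln u - 2 * ln v" using u v by (simp add: ln_div ln_realpow)
  have LHS: "\<bar>(1 - h\<^sup>2) / (1 + h * x)\<^sup>2\<bar> *\<^sub>R
           (of_real \<bar>(x + h) / (1 + h * x) - h\<bar> powr (\<alpha> - 1) *
            of_real ((1 - ((x + h) / (1 + h * x))\<^sup>2) powr b))
        = exp (of_real (ln u - 2 * ln v) + (\<alpha> - 1) * of_real (ln p + ln u - ln v) + of_real (b * (ln q + ln u - 2 * ln v)))"
  proof -
    have "u / v\<^sup>2 = exp (ln u - 2 * ln v)" using u v L3[symmetric] by simp
    moreover have "(q * u / v\<^sup>2) powr b = exp (b * (ln q + ln u - 2 * ln v))"
      using q u v L2 by (simp add: powr_def)
    moreover have "complex_of_real (p * u / v) powr (\<alpha> - 1) = exp ((\<alpha> - 1) * of_real (ln p + ln u - ln v))"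
      using p u v by (subst cpow_pos) (auto simp: L1)
    ultimately show ?thesis
      unfolding A1 A2 A3 by (simp add: scaleR_conv_of_real exp_of_real[symmetric] exp_add[symmetric] mult_ac)
        (simp add: add.assoc)
  qed
  have RHS: "of_real (1 - h\<^sup>2) powr (\<alpha> + of_real b) *
           (of_real \<bar>x\<bar> powr (\<alpha> - 1) * of_real ((1 - x\<^sup>2) powr b) *
            (1 + of_real (h * x)) powr (- (\<alpha> + of_real (2 * b + 1))))
        = exp ((\<alpha> + of_real b) * of_real (ln u) + ((\<alpha> - 1) * of_real (ln p) + of_real (b * ln q)
               + (- (\<alpha> + of_real (2 * b + 1))) * of_real (ln v)))"
  proof -
    have "(1 + complex_of_real (h * x)) = of_real v" by (simp add: v_def)
    moreover have "q powr b = exp (b * ln q)" using q by (simp add: powr_def)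
    ultimately show ?thesis using u p v
      by (simp add: cpow_pos u_def[symmetric] p_def[symmetric] q_def[symmetric] exp_of_real[symmetric] exp_add[symmetric])
  qed
  show ?thesis unfolding LHS RHS by (rule arg_cong[where f = exp]) (simp add: algebra_simps)
qed


definition qc :: "real \<Rightarrow> complex \<Rightarrow> nat \<Rightarrow> complex" where
  "qc b a k = ((- (a + of_real (2*b+1))) gchoose (2*k)) * pochhammer (a/2) k *
              rGamma (a/2 + of_nat k + of_real b + 1)"

definition Ser :: "real \<Rightarrow> complex \<Rightarrow> complex \<Rightarrow> complex" where
  "Ser b a z = (\<Sum>k. qc b a k * z^(2*k))"

definition Hf :: "real \<Rightarrow> complex \<Rightarrow> complex \<Rightarrow> complex" where
  "Hf b a z = (1 - z^2) powr (a + of_real b) * of_real (Gamma (b+1)) * Ser b a z"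

lemma absx_powr_integrable:
  assumes "s > 0"
  shows "(\<lambda>x::real. \<bar>x\<bar> powr (s - 1)) integrable_on {-1..1}"
proof -
  have "(\<lambda>x::real. x powr (s - 1)) integrable_on {0..1}"
    using integrable_on_powr_from_0[of "s - 1" 1] assms by simp
  then have I1: "(\<lambda>x::real. \<bar>x\<bar> powr (s - 1)) integrable_on {0..1}"
    by (rule integrable_spike_finite[of "{}", rotated 2]) auto
  then have I2: "(\<lambda>x::real. \<bar>x\<bar> powr (s - 1)) integrable_on {-1..0}"
    using Henstock_Kurzweil_Integration.integrable_reflect_real[where f = "\<lambda>x::real. \<bar>x\<bar> powr (s - 1)" and a = 0 and b = 1] by simp
  show ?thesis by (rule Henstock_Kurzweil_Integration.integrable_combine[OF _ _ I2 I1]) auto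
qed

lemma integral_identity:
  fixes b h :: real and \<alpha> :: complex
  assumes b: "b \<ge> 0" and a: "Re \<alpha> > 0" and h: "\<bar>h\<bar> < 1"
  shows "(1 / Gamma (\<alpha>/2)) * integral {-1..1} (\<lambda>t. of_real \<bar>t - h\<bar> powr (\<alpha> - 1) * of_real ((1 - t\<^sup>2) powr b))
           = Hf b \<alpha> (of_real h)"
proof -
  define c where "c = \<alpha> + of_real (2*b+1)"
  define K where "K = complex_of_real (1 - h\<^sup>2) powr (\<alpha> + of_real b)"
  define gn where "gn n = (- c) gchoose n" for n
  define P where "P x = of_real \<bar>x\<bar> powr (\<alpha> - 1) * of_real ((1 - x\<^sup>2) powr b)" for x :: real
  define Psi where "Psi x = K * (P x * (1 + of_real (h * x)) powr (- c))" for x :: real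
  define M where "M n = (1 + (-1)^n) * (Gamma ((\<alpha> + of_nat n)/2) * of_real (Gamma (b+1)) *
             rGamma ((\<alpha> + of_nat n)/2 + of_real b + 1) / 2)" for n :: nat
  define fN where "fN N x = (\<Sum>n<N. K * gn n * of_real h ^ n * (P x * of_real x ^ n))" for N x
  define B where "B = (\<Sum>n. norm (gn n) * \<bar>h\<bar> ^ n)"
  define D where "D x = norm K * B * \<bar>x\<bar> powr (Re \<alpha> - 1)" for x :: real
  define f where "f t = of_real \<bar>t - h\<bar> powr (\<alpha> - 1) * of_real ((1 - t\<^sup>2) powr b)" for t :: real
  define phi where "phi x = (x + h) / (1 + h * x)" for x :: real
  define phi' where "phi' x = (1 - h\<^sup>2) / (1 + h * x)\<^sup>2" for x :: real
  have Bsum: "summable (\<lambda>n. norm (gn n) * \<bar>h\<bar> ^ n)"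
    unfolding gn_def using h by (intro summable_gchoose_norm) auto
  have mom: "((\<lambda>x. P x * of_real x ^ n) has_integral M n) {-1..1}" for n
    using moment[OF b a, of n] by (simp add: P_def M_def)
  have intN: "((fN N) has_integral (\<Sum>n<N. K * gn n * of_real h ^ n * M n)) {-1..1}" for N
    unfolding fN_def by (intro has_integral_sum has_integral_mult_right mom) auto
  have Pbound: "norm (P x * of_real x ^ n) \<le> \<bar>x\<bar> powr (Re \<alpha> - 1)" if x: "x \<in> {-1..1}" for x n
  proof -
    have w0: "0 \<le> (1 - x\<^sup>2) powr b" by simp
    have x2: "x\<^sup>2 \<le> 1" using x by (simp add: abs_square_le_1 abs_le_iff)
    have w1: "(1 - x\<^sup>2) powr b \<le> 1" using x2 b by (intro powr_le1) auto
    have xn: "\<bar>x\<bar> ^ n \<le> 1" using x by (intro power_le_one) auto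
    have "norm (P x * of_real x ^ n) = \<bar>x\<bar> powr (Re \<alpha> - 1) * ((1 - x\<^sup>2) powr b * \<bar>x\<bar> ^ n)"
      using w0 by (simp add: P_def norm_mult norm_power norm_powr_real_powr)
    also have "\<dots> \<le> \<bar>x\<bar> powr (Re \<alpha> - 1) * (1 * 1)"
      using w0 w1 xn by (intro mult_left_mono mult_mono) auto
    finally show ?thesis by simp
  qed
  have fN_bound: "norm (fN N x) \<le> D x" if x: "x \<in> {-1..1}" for N x
  proof -
    have "norm (fN N x) \<le> (\<Sum>n<N. norm (K * gn n * of_real h ^ n * (P x * of_real x ^ n)))"
      unfolding fN_def by (rule norm_sum)
    also have "\<dots> \<le> (\<Sum>n<N. norm K * (norm (gn n) * \<bar>h\<bar> ^ n) * \<bar>x\<bar> powr (Re \<alpha> - 1))"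
    proof (intro sum_mono)
      fix n assume "n \<in> {..<N}"
      have "norm (K * gn n * of_real h ^ n * (P x * of_real x ^ n))
             = norm K * (norm (gn n) * \<bar>h\<bar> ^ n) * norm (P x * of_real x ^ n)"
        by (simp add: norm_mult norm_power mult_ac)
      also have "\<dots> \<le> norm K * (norm (gn n) * \<bar>h\<bar> ^ n) * \<bar>x\<bar> powr (Re \<alpha> - 1)"
        by (intro mult_left_mono Pbound[OF x]) auto
      finally show "norm (K * gn n * of_real h ^ n * (P x * of_real x ^ n))
             \<le> norm K * (norm (gn n) * \<bar>h\<bar> ^ n) * \<bar>x\<bar> powr (Re \<alpha> - 1)" .
    qed
    also have "\<dots> = norm K * (\<Sum>n<N. norm (gn n) * \<bar>h\<bar> ^ n) * \<bar>x\<bar> powr (Re \<alpha> - 1)"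
      by (simp add: sum_distrib_left sum_distrib_right)
    also have "\<dots> \<le> norm K * B * \<bar>x\<bar> powr (Re \<alpha> - 1)"
      unfolding B_def by (intro mult_right_mono mult_left_mono sum_le_suminf Bsum) auto
    finally show ?thesis by (simp add: D_def)
  qed
  have D_int: "D integrable_on {-1..1}"
    unfolding D_def using integrable_cmul[OF absx_powr_integrable[of "Re \<alpha>"], of "norm K * B"] a by simp
  have conv: "(\<lambda>N. fN N x) \<longlonglongrightarrow> Psi x" if x: "x \<in> {-1..1}" for x
  proof -
    have hx: "norm (complex_of_real (h * x)) < 1"
    proof -
      have "\<bar>x\<bar> \<le> 1" using x by auto
      then have "\<bar>h\<bar> * \<bar>x\<bar> \<le> \<bar>h\<bar>" by (intro mult_left_le) auto
      then show ?thesis using h by (simp add: norm_mult)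
    qed
    have "(\<lambda>n. gn n * of_real (h * x) ^ n) sums (1 + of_real (h * x)) powr (- c)"
      unfolding gn_def by (rule gen_binomial_complex[OF hx])
    from sums_mult[OF this, of "K * P x"]
    have "(\<lambda>n. K * P x * (gn n * of_real (h * x) ^ n)) sums (K * P x * (1 + of_real (h * x)) powr (- c))" .
    moreover have "(\<lambda>n. K * P x * (gn n * of_real (h * x) ^ n)) = (\<lambda>n. K * gn n * of_real h ^ n * (P x * of_real x ^ n))"
      by (rule ext) (simp only: of_real_mult power_mult_distrib mult_ac)
    moreover have "K * P x * (1 + of_real (h * x)) powr (- c) = Psi x"
      by (simp add: Psi_def)
    ultimately have "(\<lambda>n. K * gn n * of_real h ^ n * (P x * of_real x ^ n)) sums Psi x"
      by simp
    then show ?thesis unfolding sums_def fN_def .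
  qed
  have DC: "Psi integrable_on {-1..1} \<and> (\<lambda>N. integral {-1..1} (fN N)) \<longlonglongrightarrow> integral {-1..1} Psi"
    using dominated_convergence[of fN "{-1..1}" D Psi] intN D_int fN_bound conv
    by (auto simp: has_integral_integrable)
  have ser: "(\<lambda>n. K * gn n * of_real h ^ n * M n) sums integral {-1..1} Psi"
  proof -
    have eqI: "\<And>N. integral {-1..1} (fN N) = (\<Sum>n<N. K * gn n * of_real h ^ n * M n)"
      using intN integral_unique by blast
    from DC have "(\<lambda>N. integral {-1..1} (fN N)) \<longlonglongrightarrow> integral {-1..1} Psi" by blast
    then show ?thesis unfolding sums_def eqI .
  qed
  have Psi_bound: "norm (Psi x) \<le> D x" if x: "x \<in> {-1..1}" for x
    by (rule LIMSEQ_le_const2[OF tendsto_norm[OF conv[OF x]]]) (use fN_bound[OF x] in auto)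
  have Psi_abs: "Psi absolutely_integrable_on {-1..1}"
    by (rule absolutely_integrable_integrable_bound[where S="{-1..1}" and f=Psi and g=D])
       (use Psi_bound DC D_int in auto)
  have Phi_eq: "\<bar>phi' x\<bar> *\<^sub>R f (phi x) = Psi x" if "x \<in> {-1..1} - {-1,0,1}" for x
    using mob_integrand[OF h, of x \<alpha> b] that
    by (auto simp: phi_def phi'_def f_def Psi_def K_def P_def c_def mult_ac)
  have Phi_abs: "(\<lambda>x. \<bar>phi' x\<bar> *\<^sub>R f (phi x)) absolutely_integrable_on {-1..1}"
    by (rule absolutely_integrable_spike[OF Psi_abs, of "{-1,0,1}"]) (use Phi_eq in auto)
  have Phi_int: "integral {-1..1} (\<lambda>x. \<bar>phi' x\<bar> *\<^sub>R f (phi x)) = integral {-1..1} Psi"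
    by (rule integral_spike[of "{-1,0,1}"]) (use Phi_eq in auto)
  have der: "\<And>x. x \<in> {-1..1} \<Longrightarrow> (phi has_field_derivative phi' x) (at x within {-1..1})"
    unfolding phi_def phi'_def using mob_pos[OF h] by (intro mob_deriv) (auto simp: less_imp_neq[symmetric])
  have CV: "f absolutely_integrable_on phi ` {-1..1} \<and> integral (phi ` {-1..1}) f = integral {-1..1} Psi"
    using has_absolute_integral_change_of_variables_real[OF _ der mob_inj[OF h, folded phi_def],
            of f "integral {-1..1} Psi"] Phi_abs Phi_int by auto
  have img: "phi ` {-1..1} = {-1..1}" unfolding phi_def by (rule mob_image[OF h])
  have If: "integral {-1..1} f = integral {-1..1} Psi" using CV img by simp
  define I where "I = integral {-1..1} Psi"
  define t where "t n = K * gn n * of_real h ^ n * M n" for n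
  have "(\<lambda>k. sum t {k * 2..<k * 2 + 2}) sums I"
    using sums_group[OF ser[folded t_def I_def], of 2] by simp
  moreover have "sum t {k * 2..<k * 2 + 2} = t (2 * k)" for k
  proof -
    have "{k * 2..<k * 2 + 2} = {2 * k, Suc (2 * k)}" by auto
    moreover have "M (Suc (2 * k)) = 0" by (simp add: M_def)
    ultimately show ?thesis by (simp add: t_def)
  qed
  ultimately have tsum: "(\<lambda>k. t (2 * k)) sums I" by simp
  have ga: "Gamma (\<alpha>/2) \<noteq> 0"
    using a by (auto simp: Gamma_eq_zero_iff elim!: nonpos_Ints_cases)
  have t2k: "t (2 * k) / Gamma (\<alpha>/2) = K * of_real (Gamma (b+1)) * (qc b \<alpha> k * of_real h ^ (2 * k))" for k
  proof -
    have e1: "(\<alpha> + of_nat (2 * k)) / 2 = \<alpha>/2 + of_nat k" by (simp add: field_simps)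
    have e2: "Gamma (\<alpha>/2 + of_nat k) / Gamma (\<alpha>/2) = pochhammer (\<alpha>/2) k"
      using a by (subst pochhammer_Gamma) (auto elim!: nonpos_Ints_cases)
    have "t (2 * k) / Gamma (\<alpha>/2) = K * gn (2 * k) * of_real h ^ (2 * k) *
            (Gamma (\<alpha>/2 + of_nat k) / Gamma (\<alpha>/2)) * of_real (Gamma (b+1)) * rGamma (\<alpha>/2 + of_nat k + of_real b + 1)"
      unfolding t_def M_def e1 by simp
    also have "\<dots> = K * of_real (Gamma (b+1)) * (qc b \<alpha> k * of_real h ^ (2 * k))"
      unfolding e2 qc_def gn_def c_def by (simp add: mult_ac)
    finally show ?thesis .
  qed
  from sums_divide[OF tsum, of "Gamma (\<alpha>/2)"]
  have S1: "(\<lambda>k. K * of_real (Gamma (b+1)) * (qc b \<alpha> k * of_real h ^ (2 * k))) sums (I / Gamma (\<alpha>/2))"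
    by (simp add: t2k)
  have Kn: "K \<noteq> 0"
  proof -
    have "h\<^sup>2 < 1" using h abs_square_less_1 by blast
    then have "complex_of_real (1 - h\<^sup>2) \<noteq> 0" by (simp only: of_real_eq_0_iff)
    then show ?thesis unfolding K_def by (simp add: powr_def)
  qed
  have Gn: "complex_of_real (Gamma (b+1)) \<noteq> 0" using b by (simp add: Gamma_real_pos less_imp_neq[symmetric])
  have S2: "(\<lambda>k. K * of_real (Gamma (b+1)) * (qc b \<alpha> k * of_real h ^ (2 * k)) / (K * of_real (Gamma (b+1))))
              sums (I / Gamma (\<alpha>/2) / (K * of_real (Gamma (b+1))))"
    by (rule sums_divide[OF S1])
  have eqf: "(\<lambda>k. K * of_real (Gamma (b+1)) * (qc b \<alpha> k * of_real h ^ (2 * k)) / (K * of_real (Gamma (b+1))))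
              = (\<lambda>k. qc b \<alpha> k * of_real h ^ (2 * k))"
    using Kn Gn by (auto simp: fun_eq_iff)
  have "(\<lambda>k. qc b \<alpha> k * of_real h ^ (2 * k)) sums (I / Gamma (\<alpha>/2) / (K * of_real (Gamma (b+1))))"
    using S2 unfolding eqf .
  then have "Ser b \<alpha> (of_real h) = I / Gamma (\<alpha>/2) / (K * of_real (Gamma (b+1)))"
    unfolding Ser_def by (rule sums_unique[symmetric])
  moreover have "(1 - (complex_of_real h)^2) powr (\<alpha> + of_real b) = K" by (simp add: K_def)
  ultimately have "Hf b \<alpha> (of_real h) = I / Gamma (\<alpha>/2)"
    unfolding Hf_def using Kn Gn by (simp add: field_simps)
  then show ?thesis using If[unfolded f_def] by (simp add: I_def)
qed


lemma m_step:
  fixes a :: complex and b :: real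
  assumes b: "b \<ge> 0" and k: "Re (a/2) + real k \<ge> 0"
  shows "norm (pochhammer (a/2) (Suc k) * rGamma (a/2 + of_nat (Suc k) + of_real b + 1))
         \<le> norm (pochhammer (a/2) k * rGamma (a/2 + of_nat k + of_real b + 1))"
proof -
  define w where "w = a/2 + of_nat k + of_real b + 1"
  define v where "v = a/2 + of_nat k"
  have wv: "w = v + of_real (b + 1)" by (simp add: w_def v_def)
  have Rev: "Re v \<ge> 0" using k by (simp add: v_def)
  have "(norm v)\<^sup>2 \<le> (norm w)\<^sup>2"
    unfolding wv cmod_power2 using Rev b by (simp add: power2_eq_square algebra_simps)
  then have vw: "norm v \<le> norm w" by (simp add: power2_le_iff_abs_le)
  have w0: "w \<noteq> 0"
  proof
    assume "w = 0"
    then have "Re w = 0" by simp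
    moreover have "Re w > 0" using Rev b by (simp add: wv)
    ultimately show False by simp
  qed
  have r: "rGamma (a/2 + of_nat (Suc k) + of_real b + 1) = rGamma w / w"
    using rGamma_plus1[of w] w0 by (simp add: w_def field_simps)
  have "norm (pochhammer (a/2) (Suc k) * rGamma (a/2 + of_nat (Suc k) + of_real b + 1))
        = norm (pochhammer (a/2) k * rGamma w) * (norm v / norm w)"
    unfolding r by (simp add: pochhammer_rec' v_def norm_mult norm_divide mult_ac)
  also have "\<dots> \<le> norm (pochhammer (a/2) k * rGamma w) * 1"
    using vw w0 by (intro mult_left_mono) (auto simp: divide_le_eq_1)
  finally show ?thesis by (simp add: w_def)
qed

lemma m_bound:
  fixes b R :: real
  assumes b: "b \<ge> 0"
  shows "\<exists>C. \<forall>(a::complex) k. norm a \<le> R \<longrightarrow> norm (pochhammer (a/2) k * rGamma (a/2 + of_nat k + of_real b + 1)) \<le> C"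
proof -
  define m where "m k a = pochhammer (a/2) k * rGamma (a/2 + of_nat k + of_real b + 1)" for k and a :: complex
  define N0 where "N0 = nat \<lceil>R\<rceil>"
  define F where "F a = (\<Sum>j\<le>N0. norm (m j a))" for a
  have contF: "continuous_on (cball 0 R) F"
    unfolding F_def m_def by (intro continuous_intros holomorphic_on_imp_continuous_on holomorphic_intros) auto
  obtain C where C: "\<forall>y\<in>F ` cball 0 R. norm y \<le> C"
    using compact_imp_bounded[OF compact_continuous_image[OF contF compact_cball]]
    unfolding bounded_iff by blast
  have "norm (m k a) \<le> C" if a: "norm a \<le> R" for a k
  proof -
    have FC: "F a \<le> C" using C a by force
    have le_F: "norm (m j a) \<le> F a" if "j \<le> N0" for j
      unfolding F_def using that by (intro member_le_sum) auto
    show ?thesis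
    proof (cases "k \<le> N0")
      case True then show ?thesis using le_F FC by force
    next
      case False
      have mono: "norm (m j a) \<le> norm (m N0 a)" if "N0 \<le> j" for j
        using that
      proof (induction j rule: dec_induct)
        case base then show ?case by simp
      next
        case (step n)
        have hn: "N0 \<le> n" and IH: "norm (m n a) \<le> norm (m N0 a)" using step by auto
        have "Re (a/2) + real n \<ge> 0"
        proof -
          have "- norm a \<le> Re a" using abs_Re_le_cmod[of a] by linarith
          moreover have "real n \<ge> R" using hn unfolding N0_def by linarith
          ultimately show ?thesis using a by simp
        qed
        then have "norm (m (Suc n) a) \<le> norm (m n a)" unfolding m_def by (rule m_step[OF b])
        then show ?case using IH by linarith
      qed
      have "norm (m k a) \<le> norm (m N0 a)" using False by (intro mono) auto
      then show ?thesis using le_F[of N0] FC by force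
    qed
  qed
  then show ?thesis unfolding m_def by blast
qed


lemma qc_alt: "qc b a k = pochhammer (a + of_real (2*b+1)) (2*k) / fact (2*k) * pochhammer (a/2) k *
              rGamma (a/2 + of_nat k + of_real b + 1)"
  unfolding qc_def gbinomial_pochhammer minus_minus by (simp add: power_mult)

lemma qc_holo [holomorphic_intros]: "(\<lambda>a. qc b a k) holomorphic_on A"
  unfolding qc_alt by (intro holomorphic_intros) auto

lemma Ser_majorant:
  fixes b R r :: real
  assumes b: "b \<ge> 0" and R: "R \<ge> 0" and r: "0 \<le> r" "r < 1"
  shows "\<exists>M. summable M \<and> (\<forall>k (a::complex) (z::complex). norm a \<le> R \<longrightarrow> norm z \<le> r \<longrightarrow> norm (qc b a k * z^(2*k)) \<le> M k)"
proof -
  obtain C where C: "\<And>(a::complex) k. norm a \<le> R \<Longrightarrow>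
      norm (pochhammer (a/2) k * rGamma (a/2 + of_nat k + of_real b + 1)) \<le> C"
    using m_bound[OF b, of R] by blast
  define R' where "R' = R + 2*b + 1"
  define p where "p n = pochhammer R' n / fact n * r ^ n" for n
  have p0: "p n \<ge> 0" for n unfolding p_def R'_def using R b r
    by (intro mult_nonneg_nonneg divide_nonneg_nonneg pochhammer_nonneg0) auto
  have ps: "summable p" unfolding p_def R'_def using R b r by (intro summable_pochhammer_geom) auto
  have "(\<lambda>k. sum p {k * 2..<k * 2 + 2}) sums suminf p" using sums_group[OF summable_sums[OF ps], of 2] by simp
  then have ps2: "summable (\<lambda>k. sum p {k * 2..<k * 2 + 2})" by (rule sums_summable)
  have p2: "summable (\<lambda>k. p (2 * k))"
  proof (rule summable_comparison_test[OF _ ps2])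
    show "\<exists>N. \<forall>n\<ge>N. norm (p (2 * n)) \<le> sum p {n * 2..<n * 2 + 2}"
    proof (intro exI[of _ 0] allI impI)
      fix n :: nat
      have "{n * 2..<n * 2 + 2} = {2 * n, Suc (2 * n)}" by auto
      then show "norm (p (2 * n)) \<le> sum p {n * 2..<n * 2 + 2}" using p0[of "2*n"] p0[of "Suc (2*n)"] by simp
    qed
  qed
  define M where "M k = max C 0 * p (2 * k)" for k
  have "summable M" unfolding M_def by (intro summable_mult p2)
  moreover have "norm (qc b a k * z^(2*k)) \<le> M k" if a: "norm a \<le> R" and z: "norm z \<le> r" for a z :: complex and k
  proof -
    have c: "norm (a + of_real (2*b+1)) \<le> R'"
    proof -
      have n1: "norm (complex_of_real (2*b+1)) = 2*b+1" using b by (simp only: norm_of_real)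
      have "norm (a + of_real (2*b+1)) \<le> norm a + norm (complex_of_real (2*b+1))" by (rule norm_triangle_ineq)
      then show ?thesis unfolding R'_def using a n1 by linarith
    qed
    have g: "norm (pochhammer (a + of_real (2*b+1)) (2*k) / fact (2*k)) \<le> pochhammer R' (2*k) / fact (2*k)"
      using order_trans[OF norm_pochhammer_le pochhammer_mono_real[OF norm_ge_zero c]]
      by (simp add: norm_divide divide_right_mono)
    have zz: "norm (z^(2*k)) \<le> r^(2*k)" using z by (simp add: norm_power power_mono)
    have "norm (qc b a k * z^(2*k)) = norm (pochhammer (a + of_real (2*b+1)) (2*k) / fact (2*k)) *
            norm (pochhammer (a/2) k * rGamma (a/2 + of_nat k + of_real b + 1)) * norm (z^(2*k))"
      unfolding qc_alt by (simp only: norm_mult mult.assoc)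
    also have "\<dots> \<le> (pochhammer R' (2*k) / fact (2*k)) * max C 0 * r^(2*k)"
    proof -
      have pn: "0 \<le> pochhammer R' (2*k) / fact (2*k)" using R b
        by (intro divide_nonneg_nonneg pochhammer_nonneg0) (auto simp: R'_def)
      have pn2: "0 \<le> pochhammer R' (2*k) * max C 0 / fact (2*k)" using R b
        by (intro divide_nonneg_nonneg mult_nonneg_nonneg pochhammer_nonneg0) (auto simp: R'_def)
      show ?thesis using g C[OF a, of k] zz pn pn2 by (intro mult_mono) (auto simp: R'_def)
    qed
    finally show ?thesis by (simp add: M_def p_def mult_ac)
  qed
  ultimately show ?thesis by blast
qed

lemma Ser_unif:
  fixes b R r :: real
  assumes b: "b \<ge> 0" and R: "R \<ge> 0" and r: "0 \<le> r" "r < 1"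
      and A: "\<And>x. x \<in> A \<Longrightarrow> norm (fa x) \<le> R \<and> norm (fz x) \<le> r"
  shows "uniform_limit A (\<lambda>N x. \<Sum>k<N. qc b (fa x) k * fz x ^ (2*k)) (\<lambda>x. Ser b (fa x) (fz x)) sequentially"
proof -
  obtain M where M: "summable M" "\<And>k (a::complex) (z::complex). norm a \<le> R \<Longrightarrow> norm z \<le> r \<Longrightarrow> norm (qc b a k * z^(2*k)) \<le> M k"
    using Ser_majorant[OF b R r] by blast
  show ?thesis unfolding Ser_def
    by (rule Weierstrass_m_test[OF _ M(1)]) (use A M(2) in auto)
qed


lemma qc_cont [continuous_intros]: "continuous_on A f \<Longrightarrow> continuous_on A (\<lambda>x. qc b (f x) k)"
  using continuous_on_compose2[OF holomorphic_on_imp_continuous_on[OF qc_holo[of b k UNIV]], of A f]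
  by auto

lemma Ser_cont:
  assumes b: "b \<ge> 0"
  shows "continuous_on (UNIV \<times> ball 0 1) (\<lambda>p. Ser b (fst p) (snd p))"
proof (rule continuous_at_imp_continuous_on, intro ballI)
  fix p :: "complex \<times> complex" assume p: "p \<in> UNIV \<times> ball 0 1"
  define R where "R = norm (fst p) + 1"
  define r where "r = (1 + norm (snd p)) / 2"
  have r: "0 \<le> r" "r < 1" "norm (snd p) < r" using p by (auto simp: r_def)
  have R: "R \<ge> 0" "norm (fst p) < R" by (auto simp: R_def)
  define K where "K = cball (0::complex) R \<times> cball (0::complex) r"
  have ul: "uniform_limit K (\<lambda>N x. \<Sum>k<N. qc b (fst x) k * snd x ^ (2*k)) (\<lambda>x. Ser b (fst x) (snd x)) sequentially"
    by (rule Ser_unif[OF b R(1) r(1,2)]) (auto simp: K_def)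
  have "continuous_on K (\<lambda>x. Ser b (fst x) (snd x))"
    by (rule uniform_limit_theorem[OF _ ul]) (auto intro!: always_eventually continuous_intros)
  moreover have "p \<in> interior K"
    using R r by (simp add: K_def interior_Times mem_Times_iff)
  ultimately show "isCont (\<lambda>x. Ser b (fst x) (snd x)) p" by (rule continuous_on_interior)
qed

lemma Ser_holo_z:
  assumes b: "b \<ge> 0"
  shows "Ser b a holomorphic_on ball 0 1"
proof (rule holomorphic_uniform_sequence[where f = "\<lambda>N z. \<Sum>k<N. qc b a k * z ^ (2*k)"])
  fix z0 :: complex assume z0: "z0 \<in> ball 0 1"
  define d where "d = (1 - norm z0) / 2"
  have d: "d > 0" using z0 by (auto simp: d_def)
  have sub: "cball z0 d \<subseteq> cball 0 ((1 + norm z0)/2)"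
  proof
    fix x assume "x \<in> cball z0 d"
    then have h1: "norm (x - z0) \<le> d" by (simp add: dist_norm norm_minus_commute)
    have h2: "norm x \<le> norm z0 + norm (x - z0)" using norm_triangle_ineq[of z0 "x - z0"] by simp
    have "norm x \<le> norm z0 + d" using h1 h2 by (rule_tac order_trans[OF h2]) simp
    also have "norm z0 + d = (1 + norm z0)/2" by (simp add: d_def field_simps)
    finally have "norm x \<le> (1 + norm z0)/2" .
    then show "x \<in> cball 0 ((1 + norm z0)/2)" by simp
  qed
  have sub1: "cball 0 ((1 + norm z0)/2) \<subseteq> ball (0::complex) 1" using z0 by auto
  have "uniform_limit (cball z0 d) (\<lambda>N z. \<Sum>k<N. qc b ((\<lambda>_. a) z) k * id z ^ (2*k)) (\<lambda>z. Ser b ((\<lambda>_. a) z) (id z)) sequentially"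
    by (rule Ser_unif[OF b, of "norm a" "(1 + norm z0)/2"]) (use z0 sub in auto)
  then show "\<exists>d>0. cball z0 d \<subseteq> ball 0 1 \<and> uniform_limit (cball z0 d) (\<lambda>N z. \<Sum>k<N. qc b a k * z ^ (2*k)) (Ser b a) sequentially"
    using d sub sub1 by (intro exI[of _ d]) auto
qed (auto intro!: holomorphic_intros)

lemma Ser_holo_a:
  assumes b: "b \<ge> 0" and z: "norm z < 1"
  shows "(\<lambda>a. Ser b a z) holomorphic_on UNIV"
proof (rule holomorphic_uniform_sequence[where f = "\<lambda>N a. \<Sum>k<N. qc b a k * z ^ (2*k)"])
  fix a0 :: complex
  have "uniform_limit (cball a0 1) (\<lambda>N a. \<Sum>k<N. qc b (id a) k * (\<lambda>_. z) a ^ (2*k)) (\<lambda>a. Ser b (id a) ((\<lambda>_. z) a)) sequentially"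
  proof (rule Ser_unif[OF b, of "norm a0 + 1" "norm z"])
    fix a assume "a \<in> cball a0 1"
    then have "norm a \<le> norm a0 + 1" using norm_triangle_ineq[of a0 "a - a0"] by (auto simp: dist_norm norm_minus_commute)
    then show "norm (id a) \<le> norm a0 + 1 \<and> norm ((\<lambda>_. z) a) \<le> norm z" by simp
  qed (use z in auto)
  then show "\<exists>d>0. cball a0 d \<subseteq> UNIV \<and> uniform_limit (cball a0 d) (\<lambda>N a. \<Sum>k<N. qc b a k * z ^ (2*k)) (\<lambda>a. Ser b a z) sequentially"
    by (intro exI[of _ 1]) auto
qed (auto intro!: holomorphic_intros)

lemma Re_one_minus_sq: "norm (z::complex) < 1 \<Longrightarrow> Re (1 - z^2) > 0"
proof -
  assume z: "norm z < 1"
  have "Re (z^2) \<le> norm (z^2)" by (rule complex_Re_le_cmod)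
  also have "\<dots> = (norm z)^2" by (simp add: norm_power)
  also have "\<dots> < 1" using z by (simp add: power_less_one_iff abs_square_less_1)
  finally show ?thesis by simp
qed

lemma one_minus_sq_notin: "norm (z::complex) < 1 \<Longrightarrow> 1 - z^2 \<notin> \<real>\<^sub>\<le>\<^sub>0"
  using Re_one_minus_sq[of z] by (auto simp: complex_nonpos_Reals_iff)

lemma Hf_cont:
  assumes b: "b \<ge> 0"
  shows "continuous_on (UNIV \<times> ball 0 1) (\<lambda>p. Hf b (fst p) (snd p))"
  unfolding Hf_def
proof (intro continuous_intros Ser_cont[OF b] continuous_on_powr_complex)
  show "UNIV \<times> ball 0 1 \<subseteq> {p. 0 \<le> Re (1 - (snd p)^2) \<or> Im (1 - (snd p)^2) \<noteq> 0}"
    using Re_one_minus_sq by (force simp: less_imp_le)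
  fix p :: "complex \<times> complex" assume "p \<in> UNIV \<times> ball 0 1" "1 - (snd p)^2 = 0"
  then show "0 < Re (fst p + of_real b)" using Re_one_minus_sq[of "snd p"] by auto
qed

lemma Hf_holo_z:
  assumes b: "b \<ge> 0"
  shows "Hf b a holomorphic_on ball 0 1"
  unfolding Hf_def
  by (intro holomorphic_intros Ser_holo_z[OF b] holomorphic_on_powr) (auto simp: one_minus_sq_notin)

lemma Hf_holo_a:
  assumes b: "b \<ge> 0" and z: "norm z < 1"
  shows "(\<lambda>a. Hf b a z) holomorphic_on UNIV"
  unfolding Hf_def
  by (intro holomorphic_intros Ser_holo_a[OF b z] holomorphic_on_powr_right)


lemma deriv_cont:
  fixes H :: "complex \<Rightarrow> complex \<Rightarrow> complex"
  assumes cont: "continuous_on (UNIV \<times> ball 0 1) (\<lambda>p. H (fst p) (snd p))"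
    and hol: "\<And>a. H a holomorphic_on ball 0 1"
  shows "continuous_on (UNIV \<times> ball 0 1) (\<lambda>p. (deriv ^^ k) (H (fst p)) (snd p))"
  unfolding continuous_on_iff
proof (intro ballI allI impI)
  fix p0 :: "complex \<times> complex" and e :: real
  assume p0: "p0 \<in> UNIV \<times> ball 0 1" and e: "e > 0"
  define a0 where "a0 = fst p0"
  define z0 where "z0 = snd p0"
  have z0: "norm z0 < 1" using p0 by (auto simp: z0_def)
  define \<rho> where "\<rho> = (1 - norm z0) / 2"
  have \<rho>: "\<rho> > 0" using z0 by (simp add: \<rho>_def)
  have cb_sub: "cball z0 \<rho> \<subseteq> ball 0 1"
  proof
    fix w assume "w \<in> cball z0 \<rho>"
    then have h1: "norm (w - z0) \<le> \<rho>" by (simp add: dist_norm norm_minus_commute)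
    have h2: "norm w \<le> norm z0 + norm (w - z0)" using norm_triangle_ineq[of z0 "w - z0"] by simp
    have "norm w \<le> norm z0 + \<rho>" by (rule order_trans[OF h2]) (use h1 in simp)
    also have "\<dots> < 1" using z0 by (simp add: \<rho>_def field_simps)
    finally show "w \<in> ball 0 1" by simp
  qed
  define Kc where "Kc = cball a0 1 \<times> cball z0 \<rho>"
  have Kc_sub: "Kc \<subseteq> UNIV \<times> ball 0 1" using cb_sub by (auto simp: Kc_def)
  have uc: "uniformly_continuous_on Kc (\<lambda>p. H (fst p) (snd p))"
    by (rule compact_uniformly_continuous[OF continuous_on_subset[OF cont Kc_sub]])
       (simp add: Kc_def compact_Times)
  define \<eta> where "\<eta> = e * (\<rho>/2)^k / (4 * fact k)"
  have \<eta>: "\<eta> > 0" using e \<rho> by (simp add: \<eta>_def)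
  obtain d1 where d1: "d1 > 0" "\<And>p q. p \<in> Kc \<Longrightarrow> q \<in> Kc \<Longrightarrow> dist q p < d1 \<Longrightarrow>
       dist (H (fst q) (snd q)) (H (fst p) (snd p)) < \<eta>"
    using uc \<eta> unfolding uniformly_continuous_on_def by metis
  have cD: "continuous_on (ball 0 1) ((deriv ^^ k) (H a0))"
    by (intro holomorphic_on_imp_continuous_on holomorphic_higher_deriv hol) auto
  have "isCont ((deriv ^^ k) (H a0)) z0"
    using continuous_on_interior[OF cD] z0 by auto
  then obtain d2 where d2: "d2 > 0" "\<And>z. dist z z0 < d2 \<Longrightarrow> dist ((deriv ^^ k) (H a0) z) ((deriv ^^ k) (H a0) z0) < e/2"
    using e unfolding continuous_at_eps_delta by (metis half_gt_zero)
  define d where "d = min (min d1 1) (min d2 (\<rho>/2))"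
  have d: "d > 0" using d1 d2 \<rho> by (simp add: d_def)
  show "\<exists>d>0. \<forall>p\<in>UNIV \<times> ball 0 1. dist p p0 < d \<longrightarrow>
          dist ((deriv ^^ k) (H (fst p)) (snd p)) ((deriv ^^ k) (H (fst p0)) (snd p0)) < e"
  proof (intro exI[of _ d] conjI ballI impI d)
    fix p :: "complex \<times> complex" assume "p \<in> UNIV \<times> ball 0 1" and dp: "dist p p0 < d"
    define a where "a = fst p"
    define z where "z = snd p"
    have da: "dist a a0 < d" using dist_fst_le[of p p0] dp by (simp add: a_def a0_def)
    have dz: "dist z z0 < d" using dist_snd_le[of p p0] dp by (simp add: z_def z0_def)
    have cz: "cball z (\<rho>/2) \<subseteq> cball z0 \<rho>"
    proof
      fix w assume "w \<in> cball z (\<rho>/2)"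
      then have "dist z w \<le> \<rho>/2" by simp
      moreover have "dist z0 z < \<rho>/2" using dz by (simp add: d_def dist_commute)
      ultimately have "dist z0 w \<le> \<rho>" using dist_triangle[of z0 w z] by linarith
      then show "w \<in> cball z0 \<rho>" by simp
    qed
    have bound: "norm (H a w - H a0 w) \<le> \<eta>" if w: "w \<in> cball z (\<rho>/2)" for w
    proof -
      have wK: "w \<in> cball z0 \<rho>" using cz w by auto
      have "(a0, w) \<in> Kc" "(a, w) \<in> Kc" using wK da by (auto simp: Kc_def d_def dist_commute)
      moreover have "dist (a, w) (a0, w) < d1" using da by (simp add: dist_Pair_Pair d_def)
      ultimately have "dist (H a w) (H a0 w) < \<eta>" using d1(2)[of "(a0, w)" "(a, w)"] by simp
      then show ?thesis by (simp add: dist_norm)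
    qed
    have "z \<in> cball z (\<rho>/2)" using \<rho> by simp
    then have zb: "z \<in> ball 0 1" using cz cb_sub by blast
    have csub: "cball z (\<rho>/2) \<subseteq> ball 0 1" using cz cb_sub by blast
    have bsub: "ball z (\<rho>/2) \<subseteq> ball 0 1" using csub ball_subset_cball by blast
    have holdiff: "(\<lambda>w. H a w - H a0 w) holomorphic_on ball z (\<rho>/2)"
      by (intro holomorphic_intros holomorphic_on_subset[OF hol bsub])
    have contdiff: "continuous_on (cball z (\<rho>/2)) (\<lambda>w. H a w - H a0 w)"
      by (intro continuous_intros holomorphic_on_imp_continuous_on holomorphic_on_subset[OF hol csub])
    have "norm ((deriv ^^ k) (\<lambda>w. H a w - H a0 w) z) \<le> fact k * \<eta> / (\<rho>/2)^k"
      by (rule Cauchy_inequality[OF holdiff contdiff]) (use \<rho> bound in \<open>auto simp: dist_norm norm_minus_commute\<close>)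
    also have "\<dots> = e / 4" using \<rho> by (simp add: \<eta>_def field_simps)
    finally have t1: "norm ((deriv ^^ k) (H a) z - (deriv ^^ k) (H a0) z) \<le> e/4"
      using higher_deriv_diff[OF hol hol open_ball zb, of k] by simp
    have t2: "dist ((deriv ^^ k) (H a0) z) ((deriv ^^ k) (H a0) z0) < e/2"
      using d2(2)[of z] dz by (simp add: d_def)
    have "dist ((deriv ^^ k) (H a) z) ((deriv ^^ k) (H a0) z0)
          \<le> dist ((deriv ^^ k) (H a) z) ((deriv ^^ k) (H a0) z) + dist ((deriv ^^ k) (H a0) z) ((deriv ^^ k) (H a0) z0)"
      by (rule dist_triangle)
    also have "\<dots> < e" using t1 t2 e by (simp add: dist_norm)
    finally show "dist ((deriv ^^ k) (H (fst p)) (snd p)) ((deriv ^^ k) (H (fst p0)) (snd p0)) < e"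
      by (simp add: a_def z_def a0_def z0_def)
  qed
qed

lemma deriv_real:
  fixes H :: "complex \<Rightarrow> complex"
  assumes hol: "H holomorphic_on ball 0 1" and h: "\<bar>h\<bar> < 1"
  shows "((\<lambda>x. (deriv ^^ k) H (of_real x)) has_vector_derivative (deriv ^^ Suc k) H (of_real h)) (at h)"
proof -
  have "((deriv ^^ k) H has_field_derivative deriv ((deriv ^^ k) H) (of_real h)) (at (of_real h))"
    by (rule holomorphic_derivI[OF holomorphic_higher_deriv[OF hol]]) (use h in auto)
  then have "((\<lambda>x. (deriv ^^ k) H (of_real x)) has_vector_derivative deriv ((deriv ^^ k) H) (of_real h)) (at h within UNIV)"
    by (rule has_vector_derivative_real_field)
  then show ?thesis by simp
qed

lemma Hf_value:
  fixes b :: real and z :: complex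
  assumes b: "b \<ge> 0" and z: "norm z < 1"
  shows "Hf b (- of_real (2*b)) z = of_real (Gamma (b+1))"
proof -
  have q: "qc b (- of_real (2*b)) k * z^(2*k) = (of_real b gchoose k) * (- (z^2))^k" for k
  proof -
    have e1: "- complex_of_real (2*b) + of_real (2*b+1) = 1" by simp
    have e2: "- complex_of_real (2*b) / 2 = - of_real b" by simp
    have e3: "- complex_of_real (2*b) / 2 + of_nat k + of_real b + 1 = 1 + of_nat k" by simp
    have r: "rGamma (1 + of_nat k :: complex) = inverse (fact k)"
      by (simp add: rGamma_inverse_Gamma Gamma_fact)
    have "qc b (- of_real (2*b)) k = pochhammer (- of_real b) k / fact k"
      unfolding qc_alt e1 e2 e3 by (simp add: pochhammer_fact[symmetric] field_simps r)
    also have "\<dots> = (-1)^k * (of_real b gchoose k)"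
      by (simp add: gbinomial_pochhammer power_mult_distrib[symmetric])
    finally have qq: "qc b (- of_real (2*b)) k = (-1)^k * (of_real b gchoose k)" .
    have zz: "z^(2*k) = (z^2)^k" by (simp add: power_mult)
    show ?thesis unfolding qq zz power_minus[of "z^2"] by (simp only: mult_ac)
  qed
  have nz: "norm (- (z^2)) < 1" using z by (simp add: norm_power power_less_one_iff abs_square_less_1)
  have "(\<lambda>k. (of_real b gchoose k) * (- (z^2))^k) sums (1 + (- (z^2))) powr of_real b"
    by (rule gen_binomial_complex[OF nz])
  then have S: "Ser b (- of_real (2*b)) z = (1 - z^2) powr of_real b"
    unfolding Ser_def q by (simp add: sums_iff)
  have w: "1 - z^2 \<noteq> 0" using Re_one_minus_sq[OF z] by auto
  have "(1 - z^2) powr (- of_real (2*b) + of_real b) * (1 - z^2) powr of_real b = 1"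
    using w by (simp add: powr_def exp_add[symmetric] algebra_simps)
  then show ?thesis unfolding Hf_def S by (simp add: mult_ac)
qed


theorem lemma2p2:
  fixes n :: nat
  assumes "n > 2"
  shows "\<exists>G :: complex \<Rightarrow> real \<Rightarrow> complex.
           (\<forall>h\<in>{-1<..<1}. (\<lambda>\<alpha>. G \<alpha> h) holomorphic_on UNIV)
         \<and> (\<forall>h\<in>{-1<..<1}. \<forall>\<alpha>. Re \<alpha> > 0 \<longrightarrow> G \<alpha> h = g_int n \<alpha> h)
         \<and> (\<exists>D :: nat \<Rightarrow> complex \<Rightarrow> real \<Rightarrow> complex.
               D 0 = G
             \<and> (\<forall>k \<alpha>. \<forall>h\<in>{-1<..<1}.
                   ((\<lambda>x. D k \<alpha> x) has_vector_derivative D (Suc k) \<alpha> h) (at h))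
             \<and> (\<forall>k. continuous_on (UNIV \<times> {-1<..<1}) (\<lambda>(\<alpha>, h). D k \<alpha> h)))
         \<and> (\<forall>h\<in>{-1<..<1}. G (3 - of_nat n) h = complex_of_real (Gamma ((real n - 1) / 2)))"
proof -
  define b where "b = (real n - 3) / 2"
  have b: "b \<ge> 0" using assms by (simp add: b_def)
  define G where "G \<alpha> h = Hf b \<alpha> (of_real h)" for \<alpha> h
  define D where "D k \<alpha> x = (deriv ^^ k) (Hf b \<alpha>) (of_real x)" for k \<alpha> x
  have nh: "norm (complex_of_real h) < 1" if "h \<in> {-1<..<1}" for h
    using that by (simp add: abs_less_iff)
  have h1: "\<forall>h\<in>{-1<..<1}. (\<lambda>\<alpha>. G \<alpha> h) holomorphic_on UNIV"
    unfolding G_def using Hf_holo_a[OF b nh] by blast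
  have h2: "\<forall>h\<in>{-1<..<1}. \<forall>\<alpha>. Re \<alpha> > 0 \<longrightarrow> G \<alpha> h = g_int n \<alpha> h"
  proof (intro ballI allI impI)
    fix h :: real and \<alpha> :: complex assume h: "h \<in> {-1<..<1}" and a: "Re \<alpha> > 0"
    have "\<bar>h\<bar> < 1" using h by auto
    from integral_identity[OF b a this] show "G \<alpha> h = g_int n \<alpha> h"
      by (simp add: G_def g_int_def b_def)
  qed
  have D0: "D 0 = G" by (simp add: D_def G_def fun_eq_iff)
  have h3: "\<forall>k \<alpha>. \<forall>h\<in>{-1<..<1}. ((\<lambda>x. D k \<alpha> x) has_vector_derivative D (Suc k) \<alpha> h) (at h)"
  proof (intro allI ballI)
    fix k \<alpha> and h :: real assume h: "h \<in> {-1<..<1}"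
    then have "\<bar>h\<bar> < 1" by auto
    from deriv_real[OF Hf_holo_z[OF b] this, of k]
    show "((\<lambda>x. D k \<alpha> x) has_vector_derivative D (Suc k) \<alpha> h) (at h)"
      by (simp add: D_def)
  qed
  have h4: "\<forall>k. continuous_on (UNIV \<times> {-1<..<1}) (\<lambda>(\<alpha>, h). D k \<alpha> h)"
  proof
    fix k
    have c1: "continuous_on (UNIV \<times> ball 0 1) (\<lambda>p. (deriv ^^ k) (Hf b (fst p)) (snd p))"
      by (rule deriv_cont[OF Hf_cont[OF b] Hf_holo_z[OF b]])
    have c2: "continuous_on (UNIV \<times> {-1<..<1}) (\<lambda>p::complex \<times> real. (fst p, complex_of_real (snd p)))"
      by (intro continuous_intros)
    have sub: "(\<lambda>p::complex \<times> real. (fst p, complex_of_real (snd p))) ` (UNIV \<times> {-1<..<1}) \<subseteq> UNIV \<times> ball 0 1"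
      by (auto simp: abs_less_iff)
    have "continuous_on (UNIV \<times> {-1<..<1})
            (\<lambda>p::complex \<times> real. (\<lambda>p. (deriv ^^ k) (Hf b (fst p)) (snd p)) (fst p, complex_of_real (snd p)))"
      by (rule continuous_on_compose2[OF c1 c2 sub])
    then show "continuous_on (UNIV \<times> {-1<..<1}) (\<lambda>(\<alpha>, h). D k \<alpha> h)"
      by (simp add: D_def case_prod_unfold)
  qed
  have h5: "\<forall>h\<in>{-1<..<1}. G (3 - of_nat n) h = complex_of_real (Gamma ((real n - 1) / 2))"
  proof
    fix h :: real assume h: "h \<in> {-1<..<1}"
    have e1: "(3 - of_nat n :: complex) = - of_real (2 * b)" by (simp add: b_def field_simps)
    have e2: "(real n - 1) / 2 = b + 1" by (simp add: b_def field_simps)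
    show "G (3 - of_nat n) h = complex_of_real (Gamma ((real n - 1) / 2))"
      unfolding G_def e1 e2 by (rule Hf_value[OF b nh[OF h]])
  qed
  show ?thesis
    by (intro exI[of _ G] conjI h1 h2 h5 exI[of _ D] D0 h3 h4)
qed

end
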